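(* Let $[0,1,\dots,k]$ be a hierarchical-leadership flock, and let $x_i,v_i:[0,\infty)\to\mathbb{R}^3$ ($0\le i\le k$) satisfy \[\dot x_i=v_i,\qquad \dot v_i=\sum_{j\in\mathcal{L}(i)}a_{ij}(x)(v_j-v_i),\qquad i=1,\dots,k,\] \[\dot x_0=v_0,\qquad \dot v_0=f(t),\qquad t>0,\] with $a_{ij}(x)=H/(1+|x_i-x_j|^2)^{\beta}$ for $j\in\mathcal{L}(i)$, where $H>0$ and $0<\beta<1/2$, and $|f(t)|=O((1+t)^{-\mu})$ with $\mu>k+1$. Then there exist constant vectors $d_{ij}\in\mathbb{R}^3$, $0\le i,j\le k$, such that \[\lim_{t\to\infty}\big(x_i(t)-x_j(t)\big)=d_{ij}\quad\text{for all }0\le i,j\le k,\] with convergence rate $O\big((1+t)^{-(\mu-k-1)}\big)$.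
   Context: A flock $[0,1,\dots,k]$ is under hierarchical leadership if $j\in\mathcal{L}(i)$ (agent $i$ is led by agent $j$) only if $j<i$, and every agent $i>0$ has a nonempty leader set $\mathcal{L}(i)$. *)

theory Defs
  imports "HOL-Analysis.Analysis"
begin

definition hierarchical_leadership :: "nat \<Rightarrow> (nat \<Rightarrow> nat set) \<Rightarrow> bool" where
  "hierarchical_leadership k L \<longleftrightarrow>
     (\<forall>i\<le>k. \<forall>j\<in>L i. j < i) \<and> (\<forall>i. 0 < i \<and> i \<le> k \<longrightarrow> L i \<noteq> {})"

definition comm_weight :: "real \<Rightarrow> real \<Rightarrow> real^3 \<Rightarrow> real^3 \<Rightarrow> real" where
  "comm_weight H \<beta> xi xj = H / (1 + (norm (xi - xj))\<^sup>2) powr \<beta>"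

end

theory Submission
  imports Defs
begin


lemma nsq_deriv:
  fixes f :: "real \<Rightarrow> 'a::real_inner"
  assumes "(f has_vector_derivative f') (at t)"
  shows "((\<lambda>t. (norm (f t))\<^sup>2) has_real_derivative 2 * (f t \<bullet> f')) (at t)"
proof -
  have "((\<lambda>t. f t \<bullet> f t) has_derivative (\<lambda>h. f t \<bullet> (h *\<^sub>R f') + (h *\<^sub>R f') \<bullet> f t)) (at t)"
    using assms unfolding has_vector_derivative_def by (intro has_derivative_inner)
  moreover have "(\<lambda>h. f t \<bullet> (h *\<^sub>R f') + (h *\<^sub>R f') \<bullet> f t) = (*) (2 * (f t \<bullet> f'))"
    by (auto simp: inner_commute algebra_simps)
  ultimately show ?thesis
    unfolding has_field_derivative_def power2_norm_eq_inner by simp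
qed

lemma deriv_bound:
  fixes f :: "real \<Rightarrow> 'a::real_inner"
  assumes ab: "a \<le> b" and cf: "continuous_on {a..b} f" and cg: "continuous_on {a..b} g"
    and df: "\<And>t. a < t \<Longrightarrow> t < b \<Longrightarrow> (f has_vector_derivative f' t) (at t)"
    and dg: "\<And>t. a < t \<Longrightarrow> t < b \<Longrightarrow> (g has_real_derivative g' t) (at t)"
    and le: "\<And>t. a < t \<Longrightarrow> t < b \<Longrightarrow> norm (f' t) \<le> g' t"
  shows "norm (f b - f a) \<le> g b - g a"
proof (cases "a = b")
  case True then show ?thesis by simp
next
  case False
  then have ab': "a < b" using ab by simp
  define u where "u = f b - f a"
  define \<phi> where "\<phi> t = u \<bullet> f t - norm u * g t" for t
  have c\<phi>: "continuous_on {a..b} \<phi>" unfolding \<phi>_def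
    by (intro continuous_intros cf cg)
  have d\<phi>: "(\<phi> has_derivative (*) (u \<bullet> f' t - norm u * g' t)) (at t)" if "a < t" "t < b" for t
  proof -
    have "(\<phi> has_real_derivative (u \<bullet> f' t - norm u * g' t)) (at t)"
      unfolding \<phi>_def
      using df[OF that] dg[OF that]
      unfolding has_vector_derivative_def has_field_derivative_def
      by (auto intro!: derivative_eq_intros simp: algebra_simps)
    then show ?thesis unfolding has_field_derivative_def .
  qed
  obtain \<xi> where \<xi>: "a < \<xi>" "\<xi> < b" "\<phi> b - \<phi> a = (u \<bullet> f' \<xi> - norm u * g' \<xi>) * (b - a)"
    using mvt[OF ab' c\<phi> d\<phi>] by metis
  have "u \<bullet> f' \<xi> \<le> norm u * norm (f' \<xi>)" by (rule norm_cauchy_schwarz)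
  also have "\<dots> \<le> norm u * g' \<xi>" using le[OF \<xi>(1,2)] by (simp add: mult_left_mono)
  finally have "\<phi> b - \<phi> a \<le> 0" using \<xi>(3) ab' by (simp add: mult_nonpos_nonneg)
  moreover have "\<phi> b - \<phi> a = u \<bullet> u - norm u * (g b - g a)"
    unfolding \<phi>_def u_def by (simp add: inner_diff_right algebra_simps)
  moreover have "u \<bullet> u = norm u * norm u"
    by (simp add: power2_norm_eq_inner[symmetric] power2_eq_square)
  ultimately have 1: "norm u * norm u \<le> norm u * (g b - g a)" by simp
  have dg2: "(g has_derivative (*) (g' t)) (at t)" if "a < t" "t < b" for t
    using dg[OF that] unfolding has_field_derivative_def .
  obtain \<eta> where \<eta>: "a < \<eta>" "\<eta> < b" "g b - g a = g' \<eta> * (b - a)"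
    using mvt[OF ab' cg dg2] by metis
  have "0 \<le> g' \<eta>" using le[OF \<eta>(1,2)] norm_ge_zero order_trans by blast
  then have 2: "0 \<le> g b - g a" using \<eta>(3) ab' by simp
  show ?thesis
  proof (cases "u = 0")
    case True then show ?thesis using 2 u_def by simp
  next
    case False
    then show ?thesis using 1 u_def by (simp add: mult_le_cancel_left)
  qed
qed




lemma barrier:
  fixes h :: "real \<Rightarrow> real"
  assumes cont: "continuous_on {T..} h" and start: "h T < 0"
    and der: "\<And>t. t > T \<Longrightarrow> h t = 0 \<Longrightarrow> \<exists>D. (h has_real_derivative D) (at t) \<and> D < 0"
    and t1: "t1 \<ge> T"
  shows "h t1 < 0"
proof (rule ccontr)
  assume "\<not> h t1 < 0"
  then have h1: "h t1 \<ge> 0" by simp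
  have ci: "continuous_on {T..t1} h" using cont by (rule continuous_on_subset) auto
  define S where "S = {s \<in> {T..t1}. h s = 0}"
  have "\<exists>s\<ge>T. s \<le> t1 \<and> h s = 0" using IVT'[of h T 0 t1] start h1 t1 ci by auto
  then have Sne: "S \<noteq> {}" unfolding S_def by auto
  have Scl: "closed S" unfolding S_def by (rule continuous_closed_preimage_constant[OF ci]) simp
  have Sbdd: "bdd_below S" unfolding S_def by (rule bdd_belowI[of _ T]) auto
  define s where "s = Inf S"
  have sS: "s \<in> S" unfolding s_def by (rule closed_contains_Inf[OF Sne Sbdd Scl])
  have smin: "\<And>z. z \<in> S \<Longrightarrow> s \<le> z" unfolding s_def using Sbdd by (simp add: cInf_lower)
  have hs: "h s = 0" "T \<le> s" using sS unfolding S_def by auto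
  then have sT: "s > T" using start by (cases "s = T") auto
  obtain D where D: "(h has_real_derivative D) (at s)" "D < 0" using der[OF sT hs(1)] by blast
  obtain d where d: "d > 0" "\<And>e. e > 0 \<Longrightarrow> e < d \<Longrightarrow> h s < h (s - e)"
    using DERIV_neg_dec_left[OF D] by blast
  define e where "e = min (d/2) ((s - T)/2)"
  have e: "e > 0" "e < d" "s - e > T" using d(1) sT unfolding e_def by (auto simp: min_def field_simps)
  have pos: "h (s - e) > 0" using d(2)[OF e(1,2)] hs by simp
  have ci2: "continuous_on {T..s-e} h" using cont by (rule continuous_on_subset) auto
  obtain z where z: "z \<ge> T" "z \<le> s - e" "h z = 0" using IVT'[of h T 0 "s - e"] start pos e ci2 by auto
  have "s \<le> t1" using sS unfolding S_def by auto
  then have "z \<in> S" using z e unfolding S_def by auto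
  then have "s \<le> z" by (rule smin)
  then show False using z e by simp
qed

lemma norm_barrier:
  fixes w :: "real \<Rightarrow> 'a::real_inner"
  assumes cw: "continuous_on {T..} w" and c\<phi>: "continuous_on {T..} \<phi>"
    and dw: "\<And>t. t > T \<Longrightarrow> (w has_vector_derivative W t) (at t)"
    and d\<phi>: "\<And>t. t > T \<Longrightarrow> (\<phi> has_real_derivative \<phi>' t) (at t)"
    and pos: "\<And>t. t \<ge> T \<Longrightarrow> \<phi> t > 0"
    and start: "norm (w T) < \<phi> T"
    and key: "\<And>t. t > T \<Longrightarrow> norm (w t) = \<phi> t \<Longrightarrow> w t \<bullet> W t < \<phi> t * \<phi>' t"
    and t: "t \<ge> T"
  shows "norm (w t) < \<phi> t"
proof -
  define h where "h t = (norm (w t))\<^sup>2 - (\<phi> t)\<^sup>2" for t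
  have ch: "continuous_on {T..} h" unfolding h_def by (intro continuous_intros cw c\<phi>)
  have hT: "h T < 0" unfolding h_def using start norm_ge_zero[of "w T"]
    by (simp add: power_strict_mono)
  have der: "\<exists>D. (h has_real_derivative D) (at s) \<and> D < 0" if s: "s > T" "h s = 0" for s
  proof -
    have "(h has_real_derivative (2 * (w s \<bullet> W s) - 2 * \<phi> s * \<phi>' s)) (at s)"
    proof -
      have d2: "((\<lambda>t. (\<phi> t)\<^sup>2) has_real_derivative 2 * \<phi> s * \<phi>' s) (at s)"
        using d\<phi>[OF s(1)] by (auto intro!: derivative_eq_intros)
      show ?thesis unfolding h_def[abs_def] by (rule DERIV_diff[OF nsq_deriv[OF dw[OF s(1)]] d2])
    qed
    moreover have "norm (w s) = \<phi> s"
    proof -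
      have "(norm (w s))\<^sup>2 = (\<phi> s)\<^sup>2" using s(2) unfolding h_def by simp
      then show ?thesis using pos[of s] s(1) norm_ge_zero[of "w s"]
        by (simp add: power2_eq_iff_nonneg)
    qed
    then have "2 * (w s \<bullet> W s) - 2 * \<phi> s * \<phi>' s < 0" using key[OF s(1)] by simp
    ultimately show ?thesis by blast
  qed
  have "h t < 0" by (rule barrier[OF ch hT der t])
  then have "(norm (w t))\<^sup>2 < (\<phi> t)\<^sup>2" unfolding h_def by simp
  then show ?thesis using pos[OF t] by (simp add: power2_less_imp_less[of "norm (w t)"] less_le)
qed




lemma extend_bound:
  fixes w :: "real \<Rightarrow> 'a::real_normed_vector"
  assumes cw: "continuous_on {0..} w" and T: "T \<ge> 0" and p: "p \<ge> 0"
    and b: "\<And>t. t \<ge> T \<Longrightarrow> norm (w t) \<le> C * (1+t) powr (-p)"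
  shows "\<exists>C'. \<forall>t\<ge>0. norm (w t) \<le> C' * (1+t) powr (-p)"
proof -
  have "compact (w ` {0..T})"
    by (rule compact_continuous_image[OF continuous_on_subset[OF cw]]) auto
  then obtain B where B: "\<And>t. t \<in> {0..T} \<Longrightarrow> norm (w t) \<le> B"
    using compact_imp_bounded bounded_iff by (metis imageI)
  define C' where "C' = max C 0 + max B 0 * (1+T) powr p"
  have "norm (w t) \<le> C' * (1+t) powr (-p)" if t: "t \<ge> 0" for t
  proof (cases "t \<ge> T")
    case True
    have "norm (w t) \<le> C * (1+t) powr (-p)" using b True by simp
    also have "\<dots> \<le> C' * (1+t) powr (-p)"
    proof (intro mult_right_mono)
      have "0 \<le> max B 0 * (1+T) powr p" by simp
      then show "C \<le> C'" unfolding C'_def by linarith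
    qed simp
    finally show ?thesis .
  next
    case False
    have "(1+t) powr p \<le> (1+T) powr p" using False t p by (intro powr_mono2) auto
    then have 1: "1 \<le> (1+T) powr p * (1+t) powr (-p)"
      using t by (simp add: powr_minus field_simps)
    have "norm (w t) \<le> max B 0" using B[of t] False t by auto
    also have "\<dots> \<le> max B 0 * ((1+T) powr p * (1+t) powr (-p))"
      using 1 by (simp add: mult_le_cancel_left1)
    also have "\<dots> \<le> C' * (1+t) powr (-p)"
      unfolding C'_def by (simp add: algebra_simps)
    finally show ?thesis .
  qed
  then show ?thesis by blast
qed

lemma conv_lemma:
  fixes y w :: "real \<Rightarrow> real^3"
  assumes cy: "continuous_on {0..} y"
    and dy: "\<And>t. t > 0 \<Longrightarrow> (y has_vector_derivative w t) (at t)"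
    and b: "\<And>t. t \<ge> 0 \<Longrightarrow> norm (w t) \<le> C * (1+t) powr (-p)" and p: "p > 1"
  shows "\<exists>d. (y \<longlongrightarrow> d) at_top \<and> (\<forall>t\<ge>0. norm (y t - d) \<le> C/(p-1) * (1+t) powr (-(p-1)))"
proof -
  define E where "E t = C/(p-1) * (1+t) powr (-(p-1))" for t :: real
  have C0: "C \<ge> 0" using b[of 0] norm_ge_zero[of "w 0"] by (simp del: norm_ge_zero)
  have E0: "E t \<ge> 0" for t using C0 p unfolding E_def by simp
  have step: "norm (y b - y a) \<le> E a" if ab: "0 \<le> a" "a \<le> b" for a b
  proof -
    have dG: "((\<lambda>t. - E t) has_real_derivative C * (1+t) powr (-p)) (at t)" if "a < t" for t
    proof -
      have "((\<lambda>t. - E t) has_real_derivative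
           - (C/(p-1) * ((-(p-1)) * (1+t) powr (-(p-1) - 1) * 1))) (at t)"
        unfolding E_def using that ab p
        by (auto intro!: derivative_eq_intros)
      moreover have "- (C/(p-1) * ((-(p-1)) * (1+t) powr (-(p-1) - 1) * 1)) = C * (1+t) powr (-p)"
        using p by (simp add: field_simps)
      ultimately show ?thesis by simp
    qed
    have cE: "continuous_on {a..b} (\<lambda>t. - E t)" unfolding E_def using ab
      by (intro continuous_intros) auto
    have "norm (y b - y a) \<le> (- E b) - (- E a)"
      apply (rule deriv_bound[OF ab(2) continuous_on_subset[OF cy] cE, where f'=w and g'="\<lambda>t. C * (1+t) powr (-p)"])
      using ab dy dG b by auto
    then show ?thesis using E0[of b] by simp
  qed
  have Elim: "(E \<longlongrightarrow> 0) at_top"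
  proof -
    have "filterlim (\<lambda>t::real. 1 + t) at_top at_top"
      by (rule filterlim_tendsto_add_at_top[OF tendsto_const filterlim_ident])
    then have "((\<lambda>t. (1+t) powr (-(p-1))) \<longlongrightarrow> 0) at_top"
      using p by (intro tendsto_neg_powr) auto
    then show ?thesis unfolding E_def by (intro tendsto_mult_right_zero)
  qed
  then have Eseq: "(\<lambda>n. E (real n)) \<longlonglongrightarrow> 0"
    by (rule filterlim_compose[OF _ filterlim_real_sequentially])
  have "Cauchy (\<lambda>n. y (real n))"
  proof (rule metric_CauchyI)
    fix e :: real assume e: "e > 0"
    have "eventually (\<lambda>n. E (real n) < e/2) sequentially"
      using Eseq e by (intro order_tendstoD(2)) auto
    then obtain N where N: "\<And>n. n \<ge> N \<Longrightarrow> E (real n) < e/2" by (auto simp: eventually_sequentially)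
    have "dist (y (real m)) (y (real n)) < e" if "m \<ge> N" "n \<ge> N" for m n
    proof -
      have "norm (y (real m) - y (real N)) \<le> E (real N)" using step that by auto
      moreover have "norm (y (real n) - y (real N)) \<le> E (real N)" using step that by auto
      moreover have "dist (y (real m)) (y (real n)) \<le> norm (y (real m) - y (real N)) + norm (y (real n) - y (real N))"
        using dist_triangle2[of "y (real m)" "y (real n)" "y (real N)"] by (simp add: dist_norm)
      ultimately show ?thesis using N[of N] by simp
    qed
    then show "\<exists>M. \<forall>m\<ge>M. \<forall>n\<ge>M. dist (y (real m)) (y (real n)) < e" by blast
  qed
  then obtain d where d: "(\<lambda>n. y (real n)) \<longlonglongrightarrow> d"
    using Cauchy_convergent_iff convergent_def by blast
  have bd: "norm (d - y t) \<le> E t" if t: "t \<ge> 0" for t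
  proof (rule tendsto_upperbound)
    show "((\<lambda>n. norm (y (real n) - y t)) \<longlongrightarrow> norm (d - y t)) sequentially"
      using d by (intro tendsto_intros)
    obtain N :: nat where "real N \<ge> t" using real_arch_simple by blast
    then have "\<forall>n\<ge>N. norm (y (real n) - y t) \<le> E t"
    proof (intro allI impI)
      fix n assume "n \<ge> N"
      then have "real n \<ge> t" using \<open>real N \<ge> t\<close> by (meson order_trans of_nat_le_iff)
      then show "norm (y (real n) - y t) \<le> E t" using step t by blast
    qed
    then show "eventually (\<lambda>n. norm (y (real n) - y t) \<le> E t) sequentially"
      by (auto simp: eventually_sequentially)
  qed simp
  then have bd': "norm (y t - d) \<le> E t" if "t \<ge> 0" for t using that by (simp add: norm_minus_commute)
  have "((\<lambda>t. y t - d) \<longlongrightarrow> 0) at_top"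
  proof (rule Lim_null_comparison[OF _ Elim])
    show "\<forall>\<^sub>F t in at_top. norm (y t - d) \<le> E t"
      using bd' by (auto simp: eventually_at_top_linorder)
  qed
  then have "(y \<longlongrightarrow> d) at_top" by (rule LIM_zero_cancel)
  then show ?thesis using bd' unfolding E_def by blast
qed




locale flk =
  fixes k :: nat and L :: "nat \<Rightarrow> nat set"
    and x v :: "nat \<Rightarrow> real \<Rightarrow> real^3" and f :: "real \<Rightarrow> real^3"
    and H \<beta> \<mu> :: real
  assumes flock: "hierarchical_leadership k L"
    and H: "H > 0" and beta: "0 < \<beta>" "\<beta> < 1/2"
    and mu: "\<mu> > real k + 1"
    and f_decay: "\<exists>C. \<forall>t\<ge>0. norm (f t) \<le> C * (1 + t) powr (-\<mu>)"
    and cont_x: "\<And>i. i \<le> k \<Longrightarrow> continuous_on {0..} (x i)"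
    and cont_v: "\<And>i. i \<le> k \<Longrightarrow> continuous_on {0..} (v i)"
    and dx: "\<And>i t. i \<le> k \<Longrightarrow> t > 0 \<Longrightarrow> (x i has_vector_derivative v i t) (at t)"
    and dv: "\<And>i t. 1 \<le> i \<Longrightarrow> i \<le> k \<Longrightarrow> t > 0 \<Longrightarrow>
               (v i has_vector_derivative
                  (\<Sum>j\<in>L i. comm_weight H \<beta> (x i t) (x j t) *\<^sub>R (v j t - v i t))) (at t)"
    and dv0: "\<And>t. t > 0 \<Longrightarrow> (v 0 has_vector_derivative f t) (at t)"
begin

definition w where "w i t = v i t - v 0 t"
definition y where "y i t = x i t - x 0 t"
definition a where "a i j t = comm_weight H \<beta> (x i t) (x j t)"
definition \<alpha> where "\<alpha> i t = (\<Sum>j\<in>L i. a i j t)"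
definition \<gamma> where "\<gamma> i t = (\<Sum>j\<in>L i. H * norm (w j t)) + norm (f t)"
definition W where "W i t = (\<Sum>j\<in>L i. a i j t *\<^sub>R (v j t - v i t)) - f t"

lemma Lsub: "i \<le> k \<Longrightarrow> L i \<subseteq> {..<i}"
  using flock unfolding hierarchical_leadership_def by auto
lemma Lfin: "i \<le> k \<Longrightarrow> finite (L i)"
  using Lsub finite_subset by blast
lemma Lne: "0 < i \<Longrightarrow> i \<le> k \<Longrightarrow> L i \<noteq> {}"
  using flock unfolding hierarchical_leadership_def by auto

lemma a_nonneg: "a i j t \<ge> 0"
  unfolding a_def comm_weight_def using H by simp

lemma a_le: "a i j t \<le> H"
proof -
  have d: "1 \<le> (1 + (norm (x i t - x j t))\<^sup>2) powr \<beta>"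
    using beta by (intro ge_one_powr_ge_zero) auto
  then show ?thesis unfolding a_def comm_weight_def using H
    by (simp add: divide_le_eq)
qed

lemma alpha_nonneg: "\<alpha> i t \<ge> 0"
  unfolding \<alpha>_def by (intro sum_nonneg a_nonneg)

lemma a_lower:
  assumes n: "norm (x i t - x j t) \<le> K * (1+t)" and K: "K \<ge> 0" and t: "t \<ge> 0"
  shows "a i j t \<ge> H * (1+K\<^sup>2) powr (-\<beta>) * (1+t) powr (-2*\<beta>)"
proof -
  define n where "n = norm (x i t - x j t)"
  have "n\<^sup>2 \<le> (K * (1+t))\<^sup>2" using n unfolding n_def by (intro power_mono) auto
  moreover have "(1::real) \<le> (1+t)\<^sup>2" using t by (simp add: one_le_power)
  moreover have "(K * (1+t))\<^sup>2 = K\<^sup>2 * (1+t)\<^sup>2" by (simp add: power_mult_distrib)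
  ultimately have le: "1 + n\<^sup>2 \<le> (1+K\<^sup>2) * (1+t)\<^sup>2"
    by (simp add: algebra_simps)
  have "(1 + n\<^sup>2) powr \<beta> \<le> ((1+K\<^sup>2) * (1+t)\<^sup>2) powr \<beta>"
    using le beta by (intro powr_mono2) (simp_all add: less_imp_le)
  also have "\<dots> = (1+K\<^sup>2) powr \<beta> * ((1+t)\<^sup>2) powr \<beta>"
    using t by (intro powr_mult)
  also have "((1+t)\<^sup>2) powr \<beta> = (1+t) powr (2*\<beta>)"
  proof -
    have "(1+t)\<^sup>2 = (1+t) powr (2::real)" using t by simp
    then show ?thesis by (simp add: powr_powr)
  qed
  finally have le2: "(1 + n\<^sup>2) powr \<beta> \<le> (1+K\<^sup>2) powr \<beta> * (1+t) powr (2*\<beta>)" .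
  have "1 + n\<^sup>2 > 0" by (simp add: add_pos_nonneg)
  then have pos: "0 < (1 + n\<^sup>2) powr \<beta>" by simp
  have "H / ((1+K\<^sup>2) powr \<beta> * (1+t) powr (2*\<beta>)) \<le> H / (1 + n\<^sup>2) powr \<beta>"
  proof (rule divide_left_mono)
    have "1 + K\<^sup>2 > 0" by (simp add: add_pos_nonneg)
    moreover have "1 + t > 0" using t by simp
    ultimately have "0 < (1+K\<^sup>2) powr \<beta> * (1+t) powr (2*\<beta>)" by simp
    then show "0 < (1+K\<^sup>2) powr \<beta> * (1+t) powr (2*\<beta>) * (1 + n\<^sup>2) powr \<beta>"
      using pos by (rule mult_pos_pos)
  qed (use H le2 in auto)
  moreover have "H / ((1+K\<^sup>2) powr \<beta> * (1+t) powr (2*\<beta>)) = H * (1+K\<^sup>2) powr (-\<beta>) * (1+t) powr (-2*\<beta>)"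
    by (simp add: powr_minus divide_inverse)
  ultimately show ?thesis unfolding a_def comm_weight_def n_def by simp
qed

lemma w_fun: "w i = (\<lambda>t. v i t - v 0 t)" by (rule ext) (simp add: w_def)
lemma y_fun: "y i = (\<lambda>t. x i t - x 0 t)" by (rule ext) (simp add: y_def)

lemma w0: "w 0 t = 0" by (simp add: w_def)
lemma y0: "y 0 t = 0" by (simp add: y_def)

lemma dw: "1 \<le> i \<Longrightarrow> i \<le> k \<Longrightarrow> t > 0 \<Longrightarrow> (w i has_vector_derivative W i t) (at t)"
  unfolding w_fun W_def a_def by (intro has_vector_derivative_diff dv dv0)

lemma dy: "i \<le> k \<Longrightarrow> t > 0 \<Longrightarrow> (y i has_vector_derivative w i t) (at t)"
  unfolding y_fun w_def by (intro has_vector_derivative_diff dx) auto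

lemma cw: "i \<le> k \<Longrightarrow> continuous_on {0..} (w i)"
  unfolding w_fun by (intro continuous_intros cont_v) auto

lemma cy: "i \<le> k \<Longrightarrow> continuous_on {0..} (y i)"
  unfolding y_fun by (intro continuous_intros cont_x) auto

lemma key:
  assumes i: "1 \<le> i" "i \<le> k"
  shows "w i t \<bullet> W i t \<le> - \<alpha> i t * (norm (w i t))\<^sup>2 + norm (w i t) * \<gamma> i t"
proof -
  have W': "W i t = (\<Sum>j\<in>L i. a i j t *\<^sub>R (w j t - w i t)) - f t"
    unfolding W_def w_def by simp
  have "w i t \<bullet> W i t = (\<Sum>j\<in>L i. a i j t * (w i t \<bullet> w j t - (norm (w i t))\<^sup>2)) - w i t \<bullet> f t"
    unfolding W' by (simp add: inner_diff_right inner_sum_right power2_norm_eq_inner)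
  also have "\<dots> \<le> (\<Sum>j\<in>L i. H * norm (w j t) * norm (w i t) - a i j t * (norm (w i t))\<^sup>2) + norm (w i t) * norm (f t)"
  proof -
    have A: "(\<Sum>j\<in>L i. a i j t * (w i t \<bullet> w j t - (norm (w i t))\<^sup>2))
        \<le> (\<Sum>j\<in>L i. H * norm (w j t) * norm (w i t) - a i j t * (norm (w i t))\<^sup>2)"
    proof (rule sum_mono)
      fix j assume "j \<in> L i"
      have "a i j t * (w i t \<bullet> w j t) \<le> a i j t * (norm (w i t) * norm (w j t))"
        using a_nonneg by (intro mult_left_mono norm_cauchy_schwarz) auto
      also have "\<dots> \<le> H * (norm (w i t) * norm (w j t))"
        using a_le by (intro mult_right_mono) auto
      finally show "a i j t * (w i t \<bullet> w j t - (norm (w i t))\<^sup>2)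
          \<le> H * norm (w j t) * norm (w i t) - a i j t * (norm (w i t))\<^sup>2"
        by (simp add: algebra_simps)
    qed
    have B: "- (w i t \<bullet> f t) \<le> norm (w i t) * norm (f t)"
      using norm_cauchy_schwarz[of "w i t" "- f t"] by simp
    from A B show ?thesis by linarith
  qed
  also have "\<dots> = - \<alpha> i t * (norm (w i t))\<^sup>2 + norm (w i t) * \<gamma> i t"
    unfolding \<alpha>_def \<gamma>_def
    by (simp add: sum_subtractf sum_distrib_left sum_distrib_right algebra_simps)
  finally show ?thesis .
qed

end



lemma P_le1: "t \<ge> 0 \<Longrightarrow> s \<ge> 0 \<Longrightarrow> (1+t) powr (-s) \<le> (1::real)"
  using powr_mono[of "-s" 0 "1+t"] by simp

lemma P_mono: "t \<ge> 0 \<Longrightarrow> a \<le> b \<Longrightarrow> (1+t) powr (-b) \<le> (1+t) powr (-a::real)"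
  by (intro powr_mono) auto

context flk
begin

lemma lin_growth:
  assumes j: "j \<le> k" and B: "\<And>t. t \<ge> 0 \<Longrightarrow> norm (w j t) \<le> B" and t: "t \<ge> 0"
  shows "norm (y j t - y j 0) \<le> B * t"
proof -
  have "norm (y j t - y j 0) \<le> B * t - B * 0"
    apply (rule deriv_bound[where f' = "w j" and g' = "\<lambda>_. B"])
    using t apply simp
       apply (rule continuous_on_subset[OF cy[OF j]]) apply auto[1]
      apply (intro continuous_intros)
    using dy[OF j] B by (auto intro!: derivative_eq_intros)
  then show ?thesis by simp
qed

lemma bounded_step:
  assumes i: "1 \<le> i" "i \<le> k" and q: "q > 1" and Cg: "Cg \<ge> 0"
    and gb: "\<And>t. t \<ge> 0 \<Longrightarrow> \<gamma> i t \<le> Cg * (1+t) powr (-q)"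
  shows "\<exists>M. \<forall>t\<ge>0. norm (w i t) \<le> M"
proof -
  define C' where "C' = Cg + 1"
  define M where "M = norm (w i 0) + 1 + C'/(q-1)"
  define \<phi> where "\<phi> t = M - C'/(q-1) * (1+t) powr (-(q-1))" for t
  have C'0: "C' > 0" using Cg unfolding C'_def by simp
  have \<phi>ge: "\<phi> t \<ge> norm (w i 0) + 1" if "t \<ge> 0" for t
  proof -
    have "C'/(q-1) * (1+t) powr (-(q-1)) \<le> C'/(q-1) * 1"
      using P_le1[of t "q-1"] that q C'0 by (intro mult_left_mono) auto
    then show ?thesis unfolding \<phi>_def M_def by simp
  qed
  have \<phi>le: "\<phi> t \<le> M" for t
    unfolding \<phi>_def using q C'0 by simp
  have d\<phi>: "(\<phi> has_real_derivative C' * (1+t) powr (-q)) (at t)" if "0 < t" for t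
  proof -
    have "(\<phi> has_real_derivative
           - (C'/(q-1) * ((-(q-1)) * (1+t) powr (-(q-1) - 1) * 1))) (at t)"
      unfolding \<phi>_def[abs_def] using that q
      by (auto intro!: derivative_eq_intros)
    moreover have "- (C'/(q-1) * ((-(q-1)) * (1+t) powr (-(q-1) - 1) * 1)) = C' * (1+t) powr (-q)"
      using q by (simp add: field_simps)
    ultimately show ?thesis by simp
  qed
  have c\<phi>: "continuous_on {0..} \<phi>"
    unfolding \<phi>_def[abs_def] by (intro continuous_intros) auto
  have bnd: "norm (w i t) < \<phi> t" if t: "t \<ge> 0" for t
  proof (rule norm_barrier[OF cw[OF i(2)] c\<phi> dw[OF i] d\<phi> _ _ _ t])
    show "0 < \<phi> s" if "0 \<le> s" for s using \<phi>ge[OF that] norm_ge_zero[of "w i 0"] by linarith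
    show "norm (w i 0) < \<phi> 0" using \<phi>ge[of 0] by simp
    fix s assume s: "0 < s" "norm (w i s) = \<phi> s"
    have ps: "\<phi> s > 0" using \<phi>ge[of s] s(1) norm_ge_zero[of "w i 0"] by linarith
    have "w i s \<bullet> W i s \<le> - \<alpha> i s * (norm (w i s))\<^sup>2 + norm (w i s) * \<gamma> i s" by (rule key[OF i])
    also have "\<dots> \<le> \<phi> s * \<gamma> i s" using alpha_nonneg[of i s] s(2) by simp
    also have "\<dots> \<le> \<phi> s * (Cg * (1+s) powr (-q))" using gb[of s] s(1) ps by (intro mult_left_mono) auto
    also have "\<dots> < \<phi> s * (C' * (1+s) powr (-q))"
      using ps s(1) unfolding C'_def by (intro mult_strict_left_mono mult_strict_right_mono) auto
    finally show "w i s \<bullet> W i s < \<phi> s * (C' * (1+s) powr (-q))" .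
  qed
  show ?thesis using bnd \<phi>le by (meson less_imp_le order_trans)
qed

lemma lower_alpha:
  assumes i: "1 \<le> i" "i \<le> k" and Bi: "\<And>t. t \<ge> 0 \<Longrightarrow> norm (w i t) \<le> Bi"
    and j: "j \<in> L i" and Bj: "\<And>t. t \<ge> 0 \<Longrightarrow> norm (w j t) \<le> Bj"
  shows "\<exists>c>0. \<forall>t\<ge>0. \<alpha> i t \<ge> c * (1+t) powr (-2*\<beta>)"
proof -
  have jk: "j \<le> k" using Lsub[OF i(2)] j i by auto
  define K where "K = norm (y i 0) + norm (y j 0) + max Bi 0 + max Bj 0"
  have K0: "K \<ge> 0" unfolding K_def by simp
  have xb: "norm (x i t - x j t) \<le> K * (1+t)" if t: "t \<ge> 0" for t
  proof -
    have 1: "norm (y i t - y i 0) \<le> max Bi 0 * t"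
      using lin_growth[OF i(2) _ t, of "max Bi 0"] Bi by force
    have 2: "norm (y j t - y j 0) \<le> max Bj 0 * t"
      using lin_growth[OF jk _ t, of "max Bj 0"] Bj by force
    have "x i t - x j t = (y i t - y i 0) - (y j t - y j 0) + y i 0 - y j 0"
      unfolding y_def by simp
    moreover have "norm ((y i t - y i 0) - (y j t - y j 0) + y i 0 - y j 0) \<le> norm (y i t - y i 0) + norm (y j t - y j 0) + norm (y i 0) + norm (y j 0)"
    proof -
      have a1: "norm ((y i t - y i 0) - (y j t - y j 0) + y i 0 - y j 0) \<le> norm ((y i t - y i 0) - (y j t - y j 0) + y i 0) + norm (y j 0)"
        by (rule norm_triangle_ineq4)
      have a2: "norm ((y i t - y i 0) - (y j t - y j 0) + y i 0) \<le> norm ((y i t - y i 0) - (y j t - y j 0)) + norm (y i 0)"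
        by (rule norm_triangle_ineq)
      have a3: "norm ((y i t - y i 0) - (y j t - y j 0)) \<le> norm (y i t - y i 0) + norm (y j t - y j 0)"
        by (rule norm_triangle_ineq4)
      from a1 a2 a3 show ?thesis by linarith
    qed
    ultimately have "norm (x i t - x j t) \<le> norm (y i t - y i 0) + norm (y j t - y j 0) + norm (y i 0) + norm (y j 0)"
      by simp
    also have "\<dots> \<le> max Bi 0 * t + max Bj 0 * t + norm (y i 0) + norm (y j 0)"
      using 1 2 by simp
    also have "\<dots> \<le> K * (1+t)"
    proof -
      have "(norm (y i 0) + norm (y j 0)) * t \<ge> 0" using t by simp
      then show ?thesis unfolding K_def by (simp add: algebra_simps)
    qed
    finally show ?thesis .
  qed
  define c where "c = H * (1+K\<^sup>2) powr (-\<beta>)"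
  have c0: "c > 0"
  proof -
    have "1 + K\<^sup>2 > 0" by (simp add: add_pos_nonneg)
    then have "(1+K\<^sup>2) powr (-\<beta>) > 0" by simp
    then show ?thesis unfolding c_def using H by simp
  qed
  have "\<alpha> i t \<ge> c * (1+t) powr (-2*\<beta>)" if t: "t \<ge> 0" for t
  proof -
    have "c * (1+t) powr (-2*\<beta>) \<le> a i j t"
      using a_lower[OF xb[OF t] K0 t] unfolding c_def by simp
    also have "a i j t \<le> \<alpha> i t"
      unfolding \<alpha>_def by (rule member_le_sum[OF j]) (auto simp: a_nonneg Lfin[OF i(2)])
    finally show ?thesis .
  qed
  then show ?thesis using c0 by blast
qed

end



context flk
begin

lemma decay_step:
  assumes i: "1 \<le> i" "i \<le> k" and r: "r > 1" and Cg: "Cg \<ge> 0"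
    and gb: "\<And>t. t \<ge> 0 \<Longrightarrow> \<gamma> i t \<le> Cg * (1+t) powr (-(r+1))"
    and c: "c > 0" and ab: "\<And>t. t \<ge> 0 \<Longrightarrow> \<alpha> i t \<ge> c * (1+t) powr (-2*\<beta>)"
  shows "\<exists>C. \<forall>t\<ge>0. norm (w i t) \<le> C * (1+t) powr (-r)"
proof -
  define e where "e = 1 - 2*\<beta>"
  have e: "e > 0" using beta unfolding e_def by simp
  define T1 where "T1 = (2*r/c) powr (1/e)"
  define T where "T = max T1 1"
  have T: "T \<ge> 1" unfolding T_def by simp
  have rt: "r/(1+t) \<le> c/2 * (1+t) powr (-2*\<beta>)" if t: "t \<ge> T" for t
  proof -
    have rc: "2*r/c > 0" using r c by simp
    have "2*r/c = T1 powr e" unfolding T1_def using rc e r c by (simp add: powr_powr)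
    also have "\<dots> \<le> (1+t) powr e" using e t T unfolding T_def T1_def
      by (intro powr_mono2) auto
    also have "(1+t) powr e = (1+t) * (1+t) powr (-2*\<beta>)"
    proof -
      have "(1+t) powr e = (1+t) powr (1 + (-2*\<beta>))" unfolding e_def by simp
      also have "\<dots> = (1+t) powr 1 * (1+t) powr (-2*\<beta>)" by (rule powr_add)
      also have "\<dots> = (1+t) * (1+t) powr (-2*\<beta>)" using t T by simp
      finally show ?thesis .
    qed
    finally have h: "2*r/c \<le> (1+t) * (1+t) powr (-2*\<beta>)" .
    have "r = c/2 * (2*r/c)" using c by simp
    also have "\<dots> \<le> c/2 * ((1+t) * (1+t) powr (-2*\<beta>))" using h c by (intro mult_left_mono) auto
    finally have "r \<le> c/2 * (1+t) powr (-2*\<beta>) * (1+t)" by (simp add: algebra_simps)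
    then show ?thesis using t T by (simp add: pos_divide_le_eq)
  qed
  define M where "M = max (2*Cg/c + 1) (norm (w i T) * (1+T) powr r + 1)"
  have M0: "M > 0"
  proof -
    have "2*Cg/c \<ge> 0" using Cg c by simp
    then show ?thesis unfolding M_def by (simp add: less_max_iff_disj)
  qed
  define \<phi> where "\<phi> t = M * (1+t) powr (-r)" for t
  have \<phi>pos: "\<phi> t > 0" if "t \<ge> T" for t unfolding \<phi>_def using M0 that T by simp
  have d\<phi>: "(\<phi> has_real_derivative (- r * \<phi> t / (1+t))) (at t)" if "T < t" for t
  proof -
    have "(\<phi> has_real_derivative M * (-r * (1+t) powr (-r - 1) * 1)) (at t)"
      unfolding \<phi>_def[abs_def] using that T by (auto intro!: derivative_eq_intros)
    moreover have "M * (-r * (1+t) powr (-r - 1) * 1) = - r * \<phi> t / (1+t)"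
      unfolding \<phi>_def using that T by (simp add: powr_diff)
    ultimately show ?thesis by simp
  qed
  have c\<phi>: "continuous_on {T..} \<phi>"
    unfolding \<phi>_def[abs_def] using T by (intro continuous_intros) auto
  have cwT: "continuous_on {T..} (w i)"
    by (rule continuous_on_subset[OF cw[OF i(2)]]) (use T in auto)
  have bnd: "norm (w i t) < \<phi> t" if t: "t \<ge> T" for t
  proof (rule norm_barrier[OF cwT c\<phi> dw[OF i] d\<phi> \<phi>pos _ _ t])
    show "\<And>s. T < s \<Longrightarrow> 0 < s" using T by simp
    show "norm (w i T) < \<phi> T"
    proof -
      have "(1+T) powr r * (1+T) powr (-r) = 1" using T by (simp add: powr_add[symmetric])
      then have "(norm (w i T) * (1+T) powr r + 1) * (1+T) powr (-r) = norm (w i T) + (1+T) powr (-r)"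
        by (simp add: algebra_simps)
      moreover have "(norm (w i T) * (1+T) powr r + 1) * (1+T) powr (-r) \<le> M * (1+T) powr (-r)"
        unfolding M_def by (intro mult_right_mono) auto
      moreover have "(1+T) powr (-r) > 0" using T by simp
      ultimately show ?thesis unfolding \<phi>_def by linarith
    qed
    fix s assume s: "T < s" "norm (w i s) = \<phi> s"
    have s0: "s \<ge> 0" using s T by simp
    have ps: "\<phi> s > 0" using \<phi>pos s by simp
    define P where "P = (1+s) powr (-2*\<beta>)"
    have P0: "P > 0" unfolding P_def using s0 by simp
    have "\<gamma> i s \<le> Cg * (1+s) powr (-(r+1))" by (rule gb[OF s0])
    also have "\<dots> \<le> Cg * (1+s) powr (-(r+2*\<beta>))"
      using Cg beta s0 by (intro mult_left_mono P_mono) auto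
    also have "\<dots> < (M*c/2) * (1+s) powr (-(r+2*\<beta>))"
    proof (rule mult_strict_right_mono)
      have "M \<ge> 2*Cg/c + 1" unfolding M_def by simp
      then have "M*c \<ge> (2*Cg/c + 1) * c" using c by (intro mult_right_mono) auto
      moreover have "(2*Cg/c + 1) * c = 2*Cg + c" using c by (simp add: distrib_right)
      ultimately have "M*c \<ge> 2*Cg + c" by simp
      then show "Cg < M*c/2" using c by simp
    qed (use s0 in simp)
    also have "\<dots> = \<phi> s * (c/2 * P)"
      unfolding \<phi>_def P_def using s0 by (simp add: powr_add[symmetric] algebra_simps)
    also have "\<dots> \<le> \<phi> s * (\<alpha> i s - r/(1+s))"
      using ab[OF s0] rt[of s] s ps unfolding P_def by (intro mult_left_mono) auto
    finally have g: "\<gamma> i s < \<phi> s * (\<alpha> i s - r/(1+s))" .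
    have "w i s \<bullet> W i s \<le> - \<alpha> i s * (norm (w i s))\<^sup>2 + norm (w i s) * \<gamma> i s" by (rule key[OF i])
    also have "\<dots> = - \<alpha> i s * (\<phi> s)\<^sup>2 + \<phi> s * \<gamma> i s" using s(2) by simp
    also have "\<dots> < - \<alpha> i s * (\<phi> s)\<^sup>2 + \<phi> s * (\<phi> s * (\<alpha> i s - r/(1+s)))"
      using g ps by simp
    also have "\<dots> = \<phi> s * (- r * \<phi> s / (1+s))"
      by (simp add: power2_eq_square algebra_simps)
    finally show "w i s \<bullet> W i s < \<phi> s * (- r * \<phi> s / (1+s))" .
  qed
  have "norm (w i t) \<le> M * (1+t) powr (-r)" if "t \<ge> T" for t
    using bnd[OF that] unfolding \<phi>_def by simp
  then show ?thesis
    using extend_bound[OF cw[OF i(2)], of T r M] T r by simp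
qed

end



context flk
begin

lemma decay: "i \<le> k \<Longrightarrow> \<exists>C. \<forall>t\<ge>0. norm (w i t) \<le> C * (1+t) powr (-(\<mu> - real i))"
proof (induction i rule: less_induct)
  case (less i)
  show ?case
  proof (cases "i = 0")
    case True then show ?thesis by (auto simp: w0 intro: exI[of _ 0])
  next
    case False
    then have i: "1 \<le> i" "i \<le> k" using less.prems by auto
    have "\<forall>j. \<exists>C. j < i \<longrightarrow> (\<forall>t\<ge>0. norm (w j t) \<le> C * (1+t) powr (-(\<mu> - real j)))"
    proof
      fix j show "\<exists>C. j < i \<longrightarrow> (\<forall>t\<ge>0. norm (w j t) \<le> C * (1+t) powr (-(\<mu> - real j)))"
      proof (cases "j < i")
        case True
        then show ?thesis using less.IH[OF True] less.prems by auto
      qed auto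
    qed
    then obtain Cj where Cj: "\<And>j t. j < i \<Longrightarrow> t \<ge> 0 \<Longrightarrow> norm (w j t) \<le> Cj j * (1+t) powr (-(\<mu> - real j))"
      by metis
    obtain Cf where Cf: "\<And>t. t \<ge> 0 \<Longrightarrow> norm (f t) \<le> Cf * (1+t) powr (-\<mu>)" using f_decay by blast
    define q where "q = \<mu> - real i + 1"
    have q: "q > 2" using mu i unfolding q_def by simp
    define Cg where "Cg = (\<Sum>j\<in>L i. H * max (Cj j) 0) + max Cf 0"
    have Cg0: "Cg \<ge> 0" unfolding Cg_def using H by (intro add_nonneg_nonneg sum_nonneg) auto
    have gb: "\<gamma> i t \<le> Cg * (1+t) powr (-q)" if t: "t \<ge> 0" for t
    proof -
      have s: "(\<Sum>j\<in>L i. H * norm (w j t)) \<le> (\<Sum>j\<in>L i. H * max (Cj j) 0 * (1+t) powr (-q))"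
      proof (rule sum_mono)
        fix j assume j: "j \<in> L i"
        then have ji: "j < i" using Lsub[OF i(2)] by auto
        have "norm (w j t) \<le> Cj j * (1+t) powr (-(\<mu> - real j))" by (rule Cj[OF ji t])
        also have "\<dots> \<le> max (Cj j) 0 * (1+t) powr (-(\<mu> - real j))" by (intro mult_right_mono) auto
        also have "\<dots> \<le> max (Cj j) 0 * (1+t) powr (-q)"
          using ji t unfolding q_def by (intro mult_left_mono P_mono) auto
        finally have "norm (w j t) \<le> max (Cj j) 0 * (1+t) powr (-q)" .
        then have "H * norm (w j t) \<le> H * (max (Cj j) 0 * (1+t) powr (-q))"
          using H by (intro mult_left_mono) auto
        then show "H * norm (w j t) \<le> H * max (Cj j) 0 * (1+t) powr (-q)" by (simp add: mult.assoc)
      qed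
      have fb: "norm (f t) \<le> max Cf 0 * (1+t) powr (-q)"
      proof -
        have "norm (f t) \<le> Cf * (1+t) powr (-\<mu>)" by (rule Cf[OF t])
        also have "\<dots> \<le> max Cf 0 * (1+t) powr (-\<mu>)" by (intro mult_right_mono) auto
        also have "\<dots> \<le> max Cf 0 * (1+t) powr (-q)"
          using i t unfolding q_def by (intro mult_left_mono P_mono) auto
        finally show ?thesis .
      qed
      have "\<gamma> i t \<le> (\<Sum>j\<in>L i. H * max (Cj j) 0 * (1+t) powr (-q)) + max Cf 0 * (1+t) powr (-q)"
        unfolding \<gamma>_def using s fb by linarith
      also have "\<dots> = Cg * (1+t) powr (-q)"
      proof -
        have "(\<Sum>j\<in>L i. H * max (Cj j) 0 * (1+t) powr (-q)) = (\<Sum>j\<in>L i. H * max (Cj j) 0) * (1+t) powr (-q)"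
          by (rule sum_distrib_right[symmetric])
        then show ?thesis unfolding Cg_def by (simp only: distrib_right)
      qed
      finally show ?thesis .
    qed
    obtain M where M: "\<And>t. t \<ge> 0 \<Longrightarrow> norm (w i t) \<le> M"
      using bounded_step[OF i _ Cg0 gb] q by force
    obtain j0 where j0: "j0 \<in> L i" using Lne[of i] i by auto
    have j0i: "j0 < i" using j0 Lsub[OF i(2)] by auto
    have Bj: "norm (w j0 t) \<le> max (Cj j0) 0" if t: "t \<ge> 0" for t
    proof -
      have "norm (w j0 t) \<le> Cj j0 * (1+t) powr (-(\<mu> - real j0))" by (rule Cj[OF j0i t])
      also have "\<dots> \<le> max (Cj j0) 0 * (1+t) powr (-(\<mu> - real j0))" by (intro mult_right_mono) auto
      also have "\<dots> \<le> max (Cj j0) 0 * 1"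
        using j0i i mu t by (intro mult_left_mono P_le1) auto
      finally show ?thesis by simp
    qed
    obtain c where c: "c > 0" "\<And>t. t \<ge> 0 \<Longrightarrow> \<alpha> i t \<ge> c * (1+t) powr (-2*\<beta>)"
      using lower_alpha[OF i M j0 Bj] by blast
    have gb': "\<gamma> i t \<le> Cg * (1+t) powr (-((\<mu> - real i) + 1))" if "t \<ge> 0" for t
      using gb[OF that] unfolding q_def by simp
    have r: "\<mu> - real i > 1" using mu i by simp
    show ?thesis by (rule decay_step[OF i r Cg0 gb' c])
  qed
qed

lemma result:
  "\<exists>d :: nat \<Rightarrow> nat \<Rightarrow> real^3. \<forall>i\<le>k. \<forall>j\<le>k.
           ((\<lambda>t. x i t - x j t) \<longlongrightarrow> d i j) at_top \<and>
           (\<exists>C. \<forall>\<^sub>F t in at_top. norm (x i t - x j t - d i j) \<le> C * (1 + t) powr (-(\<mu> - real k - 1)))"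
proof -
  define p where "p = \<mu> - real k"
  have p: "p > 1" using mu unfolding p_def by simp
  have "\<forall>i. \<exists>C. i \<le> k \<longrightarrow> (\<forall>t\<ge>0. norm (w i t) \<le> C * (1+t) powr (-p))"
  proof
    fix i show "\<exists>C. i \<le> k \<longrightarrow> (\<forall>t\<ge>0. norm (w i t) \<le> C * (1+t) powr (-p))"
    proof (cases "i \<le> k")
      case True
      then obtain C where C: "\<And>t. t \<ge> 0 \<Longrightarrow> norm (w i t) \<le> C * (1+t) powr (-(\<mu> - real i))"
        using decay by blast
      have "norm (w i t) \<le> max C 0 * (1+t) powr (-p)" if t: "t \<ge> 0" for t
      proof -
        have "norm (w i t) \<le> C * (1+t) powr (-(\<mu> - real i))" by (rule C[OF t])
        also have "\<dots> \<le> max C 0 * (1+t) powr (-(\<mu> - real i))" by (intro mult_right_mono) auto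
        also have "\<dots> \<le> max C 0 * (1+t) powr (-p)"
          using True t unfolding p_def by (intro mult_left_mono P_mono) auto
        finally show ?thesis .
      qed
      then show ?thesis by blast
    qed auto
  qed
  then obtain Cw where Cw: "\<And>i t. i \<le> k \<Longrightarrow> t \<ge> 0 \<Longrightarrow> norm (w i t) \<le> Cw i * (1+t) powr (-p)"
    by metis
  have "\<forall>i. \<exists>d. i \<le> k \<longrightarrow> ((y i \<longlongrightarrow> d) at_top \<and> (\<forall>t\<ge>0. norm (y i t - d) \<le> Cw i/(p-1) * (1+t) powr (-(p-1))))"
  proof
    fix i show "\<exists>d. i \<le> k \<longrightarrow> ((y i \<longlongrightarrow> d) at_top \<and> (\<forall>t\<ge>0. norm (y i t - d) \<le> Cw i/(p-1) * (1+t) powr (-(p-1))))"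
    proof (cases "i \<le> k")
      case True
      then show ?thesis using conv_lemma[OF cy[OF True] dy[OF True] Cw[OF True] p] by blast
    qed auto
  qed
  then obtain D where D: "\<And>i. i \<le> k \<Longrightarrow> (y i \<longlongrightarrow> D i) at_top"
      "\<And>i t. i \<le> k \<Longrightarrow> t \<ge> 0 \<Longrightarrow> norm (y i t - D i) \<le> Cw i/(p-1) * (1+t) powr (-(p-1))"
    by metis
  have xy: "x i t - x j t = y i t - y j t" for i j t unfolding y_def by simp
  have "\<forall>i\<le>k. \<forall>j\<le>k.
           ((\<lambda>t. x i t - x j t) \<longlongrightarrow> D i - D j) at_top \<and>
           (\<exists>C. \<forall>\<^sub>F t in at_top. norm (x i t - x j t - (D i - D j)) \<le> C * (1 + t) powr (-(\<mu> - real k - 1)))"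
  proof (intro allI impI conjI)
    fix i j assume i: "i \<le> k" and j: "j \<le> k"
    show "((\<lambda>t. x i t - x j t) \<longlongrightarrow> D i - D j) at_top"
      unfolding xy by (intro tendsto_diff D(1) i j)
    have "norm (x i t - x j t - (D i - D j)) \<le> (Cw i/(p-1) + Cw j/(p-1)) * (1 + t) powr (-(\<mu> - real k - 1))"
      if t: "t \<ge> 0" for t
    proof -
      have "x i t - x j t - (D i - D j) = (y i t - D i) - (y j t - D j)" unfolding xy by simp
      then have "norm (x i t - x j t - (D i - D j)) \<le> norm (y i t - D i) + norm (y j t - D j)"
        using norm_triangle_ineq4 by metis
      also have "\<dots> \<le> Cw i/(p-1) * (1+t) powr (-(p-1)) + Cw j/(p-1) * (1+t) powr (-(p-1))"
        using D(2)[OF i t] D(2)[OF j t] by simp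
      also have "\<dots> = (Cw i/(p-1) + Cw j/(p-1)) * (1 + t) powr (-(\<mu> - real k - 1))"
        unfolding p_def by (simp add: algebra_simps)
      finally show ?thesis .
    qed
    then show "\<exists>C. \<forall>\<^sub>F t in at_top. norm (x i t - x j t - (D i - D j)) \<le> C * (1 + t) powr (-(\<mu> - real k - 1))"
      by (intro exI[of _ "Cw i/(p-1) + Cw j/(p-1)"]) (auto simp: eventually_at_top_linorder)
  qed
  then show ?thesis by (intro exI[of _ "\<lambda>i j. D i - D j"]) simp
qed

end

theorem corollary2:
  fixes k :: nat and L :: "nat \<Rightarrow> nat set"
    and x v :: "nat \<Rightarrow> real \<Rightarrow> real^3" and f :: "real \<Rightarrow> real^3"
    and H \<beta> \<mu> :: real
  assumes flock: "hierarchical_leadership k L"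
    and H: "H > 0" and beta: "0 < \<beta>" "\<beta> < 1/2"
    and mu: "\<mu> > real k + 1"
    and f_decay: "\<exists>C. \<forall>t\<ge>0. norm (f t) \<le> C * (1 + t) powr (-\<mu>)"
    and cont_x: "\<And>i. i \<le> k \<Longrightarrow> continuous_on {0..} (x i)"
    and cont_v: "\<And>i. i \<le> k \<Longrightarrow> continuous_on {0..} (v i)"
    and dx: "\<And>i t. i \<le> k \<Longrightarrow> t > 0 \<Longrightarrow> (x i has_vector_derivative v i t) (at t)"
    and dv: "\<And>i t. 1 \<le> i \<Longrightarrow> i \<le> k \<Longrightarrow> t > 0 \<Longrightarrow>
               (v i has_vector_derivative
                  (\<Sum>j\<in>L i. comm_weight H \<beta> (x i t) (x j t) *\<^sub>R (v j t - v i t))) (at t)"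
    and dv0: "\<And>t. t > 0 \<Longrightarrow> (v 0 has_vector_derivative f t) (at t)"
  shows "\<exists>d :: nat \<Rightarrow> nat \<Rightarrow> real^3. \<forall>i\<le>k. \<forall>j\<le>k.
           ((\<lambda>t. x i t - x j t) \<longlongrightarrow> d i j) at_top \<and>
           (\<exists>C. \<forall>\<^sub>F t in at_top. norm (x i t - x j t - d i j) \<le> C * (1 + t) powr (-(\<mu> - real k - 1)))"
proof -
  interpret flk k L x v f H \<beta> \<mu>
    by (rule flk.intro) (fact assms)+
  show ?thesis by (rule result)
qed


end
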